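(* Let $n$ be a positive integer with $n > 6\log 10$, and let $\Delta > 0$. Let $q$ be the random score taking values in $\{0,1,\dots,n\}$ with $\Pr[q = i] = \frac{\binom{n}{i}\exp\left(\frac{i\epsilon}{2\Delta}\right)}{\left(1+\exp\left(\frac{\epsilon}{2\Delta}\right)\right)^n}$, and let the number of flipped labels be $n - q$. If $\epsilon \ge 2\Delta\log\frac{1+2\sqrt{(1.5\log 10)/n}}{1-2\sqrt{(1.5\log 10)/n}}$, then $\Pr[n - q \le n/2] \ge 0.999$, i.e. with probability at least $99.9\%$ the flipping rate is at most $1/2$.
   Context: This is the distribution of the Hamming-agreement score $q(D,D^* ) = n - |\{i : y_i \ne y^*_i\}|$ when an exponential mechanism with privacy budget $\epsilon$ and sensitivity $\Delta$ outputs a binary label vector $D$ for a true label vector $D^*$ of length $n$, each output $D$ having probability proportional to $\exp(q(D,D^* )\epsilon/(2\Delta))$; $n-q$ is the number of labels changed. $\log$ denotes the natural logarithm. *)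

theory Defs
  imports Complex_Main
begin

text \<open>Probability mass of the Hamming-agreement score q = i under the exponential
mechanism on binary label vectors of length n.\<close>
definition score_prob :: "nat \<Rightarrow> real \<Rightarrow> real \<Rightarrow> nat \<Rightarrow> real" where
  "score_prob n \<epsilon> \<Delta> i =
     real (n choose i) * exp (real i * \<epsilon> / (2 * \<Delta>)) / (1 + exp (\<epsilon> / (2 * \<Delta>))) ^ n"

definition score_event_prob :: "nat \<Rightarrow> real \<Rightarrow> real \<Rightarrow> (nat \<Rightarrow> bool) \<Rightarrow> real" where
  "score_event_prob n \<epsilon> \<Delta> P = (\<Sum>i\<in>{i\<in>{0..n}. P i}. score_prob n \<epsilon> \<Delta> i)"

end

theory Submission
  imports Defs "HOL-Probability.Probability"
begin

theorem corollary3: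
  fixes n :: nat and \<epsilon> \<Delta> :: real
  assumes "n > 0"
    and "real n > 6 * ln 10"
    and "\<Delta> > 0"
    and "\<epsilon> \<ge> 2 * \<Delta> * ln ((1 + 2 * sqrt (1.5 * ln 10 / real n)) / (1 - 2 * sqrt (1.5 * ln 10 / real n)))"
  shows "score_event_prob n \<epsilon> \<Delta> (\<lambda>q. real n - real q \<le> real n / 2) \<ge> 0.999"
proof -
  define s where "s = sqrt (1.5 * ln 10 / real n)"
  define e where "e = exp (\<epsilon> / (2 * \<Delta>))"
  define p where "p = e / (1 + e)"
  have npos: "real n > 0" using assms(1) by simp
  have ln10: "ln (10::real) > 0" by simp
  have s2: "s^2 = 1.5 * ln 10 / real n" unfolding s_def using ln10 npos by simp
  have s0: "s \<ge> 0" unfolding s_def using ln10 npos by simp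
  have "s^2 < 1/4" unfolding s2 using assms(2) npos by (simp add: field_simps)
  have shalf: "s < 1/2"
  proof (rule ccontr)
    assume "\<not> s < 1/2"
    hence "(1/2::real)^2 \<le> s^2" by (intro power_mono) auto
    thus False using \<open>s^2 < 1/4\<close> by (simp add: power2_eq_square)
  qed
  have e0: "e > 0" unfolding e_def by simp
  have "\<epsilon> / (2 * \<Delta>) \<ge> ln ((1 + 2 * s) / (1 - 2 * s))"
    using assms(3,4) unfolding s_def by (simp add: field_simps)
  moreover have rpos: "(1 + 2 * s) / (1 - 2 * s) > 0" using shalf s0 by simp
  ultimately have "e \<ge> exp (ln ((1 + 2 * s) / (1 - 2 * s)))" unfolding e_def
    by (simp only: exp_le_cancel_iff)
  hence "e \<ge> (1 + 2 * s) / (1 - 2 * s)" using rpos by simp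
  hence "e * (1 - 2 * s) \<ge> 1 + 2 * s" using shalf by (simp add: field_simps)
  hence pge: "p \<ge> 1/2 + s" unfolding p_def using e0 by (simp add: field_simps)
  have p01: "p \<in> {0..1}" unfolding p_def using e0 by (simp add: field_simps)
  have q1: "1 - p = 1 / (1 + e)" unfolding p_def using e0 by (simp add: field_simps)
  interpret B: binomial_distribution n p using p01 by unfold_locales
  have pmf_eq: "score_prob n \<epsilon> \<Delta> i = pmf (binomial_pmf n p) i" if "i \<le> n" for i
  proof -
    have "pmf (binomial_pmf n p) i = (n choose i) * (e / (1+e))^i * (1/(1+e))^(n-i)"
      using p01 q1 by (simp add: p_def)
    also have "\<dots> = (n choose i) * e^i / (1+e)^(i + (n-i))"
      using e0 by (simp add: power_divide power_add)
    also have "\<dots> = (n choose i) * e^i / (1+e)^n" using that by simp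
    finally show ?thesis unfolding score_prob_def e_def
      by (simp add: exp_of_nat_mult[symmetric] mult.commute)
  qed
  let ?A = "{i\<in>{0..n}. real n - real i \<le> real n / 2}"
  have "score_event_prob n \<epsilon> \<Delta> (\<lambda>q. real n - real q \<le> real n / 2) = (\<Sum>i\<in>?A. pmf (binomial_pmf n p) i)"
    unfolding score_event_prob_def by (intro sum.cong) (auto simp: pmf_eq)
  also have "\<dots> = measure_pmf.prob (binomial_pmf n p) ?A"
    by (subst measure_measure_pmf_finite) auto
  finally have eq: "score_event_prob n \<epsilon> \<Delta> (\<lambda>q. real n - real q \<le> real n / 2) = measure_pmf.prob (binomial_pmf n p) ?A" .
  have setpmf: "set_pmf (binomial_pmf n p) \<subseteq> {0..n}" using p01 by (auto simp: set_pmf_binomial_eq)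
  have "measure_pmf.prob (binomial_pmf n p) ?A \<ge> 1 - measure_pmf.prob (binomial_pmf n p) {x. x / n \<le> p - s}"
  proof -
    have "measure_pmf.prob (binomial_pmf n p) (UNIV - {x. x / n \<le> p - s}) \<le> measure_pmf.prob (binomial_pmf n p) ?A"
    proof (rule measure_pmf.finite_measure_mono_AE)
      show "AE x in measure_pmf (binomial_pmf n p). x \<in> UNIV - {x. x / n \<le> p - s} \<longrightarrow> x \<in> ?A"
      proof (rule AE_pmfI)
        fix x assume x: "x \<in> set_pmf (binomial_pmf n p)"
        show "x \<in> UNIV - {x. x / n \<le> p - s} \<longrightarrow> x \<in> ?A"
        proof
          assume "x \<in> UNIV - {x. x / n \<le> p - s}"
          hence "x / n > p - s" by auto
          hence "x / n > 1/2" using pge by linarith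
          hence "real x > n / 2" using npos by (simp add: field_simps)
          thus "x \<in> ?A" using x setpmf by auto
        qed
      qed
    qed auto
    moreover have "measure_pmf.prob (binomial_pmf n p) (UNIV - {x. x / n \<le> p - s}) = 1 - measure_pmf.prob (binomial_pmf n p) {x. x / n \<le> p - s}"
      using measure_pmf.prob_compl[of "{x. x / n \<le> p - s}" "binomial_pmf n p"] by simp
    ultimately show ?thesis by linarith
  qed
  moreover have "measure_pmf.prob (binomial_pmf n p) {x. x / n \<le> p - s} \<le> exp (-2 * n * s^2)"
    using B.prob_le'[OF assms(1) s0] .
  moreover have "exp (-2 * n * s^2) = 1/1000"
  proof -
    have "-2 * n * s^2 = - (3 * ln 10)" unfolding s2 using npos by simp
    also have "\<dots> = ln (1/1000)" using ln_realpow[of "10::real" 3] by (simp add: ln_div)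
    finally show ?thesis by simp
  qed
  ultimately show ?thesis unfolding eq by simp
qed

end
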